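(* Let $p>1$ and $x\in(0,1)$. Then $$\arcsin_p\left(\frac{x}{\sqrt[p]{1+x^p}}\right)=\arctan_p(x),\qquad \arcsin_p(x)=\arctan_p\left(\frac{x}{\sqrt[p]{1-x^p}}\right),$$ $$\arccos_p(x)=\arctan_p\left(\frac{\sqrt[p]{1-x^p}}{x}\right),\qquad \arccos_p\left(\frac{1}{\sqrt[p]{1+x^p}}\right)=\arctan_p(x).$$
   Context: For $p>1$: $\arcsin_p y=\int_0^y(1-t^p)^{-1/p}dt$ for $y\in(0,1)$; $\arccos_p y=\arcsin_p\bigl((1-y^p)^{1/p}\bigr)$ for $y\in(0,1)$; $\arctan_p y=\int_0^y(1+t^p)^{-1}dt$ for $y\ge0$. *)

theory Defs
  imports "HOL-Analysis.Analysis"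
begin

definition arcsin_p :: "real \<Rightarrow> real \<Rightarrow> real" where
  "arcsin_p p y = integral {0..y} (\<lambda>t. (1 - t powr p) powr (- 1 / p))"

definition arccos_p :: "real \<Rightarrow> real \<Rightarrow> real" where
  "arccos_p p y = arcsin_p p ((1 - y powr p) powr (1 / p))"

definition arctan_p :: "real \<Rightarrow> real \<Rightarrow> real" where
  "arctan_p p y = integral {0..y} (\<lambda>t. 1 / (1 + t powr p))"

end

theory Submission
  imports Defs
begin

lemma deriv_g:
  fixes p t :: real
  assumes p: "p > 1" and t: "t > 0"
  shows "((\<lambda>t. t / (1 + t powr p) powr (1/p)) has_real_derivative (1 + t powr p) powr (-1/p - 1)) (at t)"
proof -
  define A where "A = 1 + t powr p"
  have A: "A > 0" using t by (simp add: A_def add_pos_nonneg)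
  have d1: "((\<lambda>t. 1 + t powr p) has_real_derivative p * t powr (p-1)) (at t)"
    using has_real_derivative_powr[OF t, of p] t by (auto intro!: derivative_eq_intros)
  have d3: "((\<lambda>t. (1 + t powr p) powr (-1/p)) has_real_derivative (-1/p) * A powr (-1/p - 1) * (p * t powr (p-1))) (at t)"
    using DERIV_fun_powr[OF d1, of "-1/p"] A unfolding A_def by simp
  have d4: "((\<lambda>t. t * (1 + t powr p) powr (-1/p)) has_real_derivative 1 * A powr (-1/p) + ((-1/p) * A powr (-1/p - 1) * (p * t powr (p-1))) * t) (at t)"
    using DERIV_mult[OF DERIV_ident d3] unfolding A_def .
  have tp: "t * t powr (p - 1) = t powr p" using t by (simp add: powr_diff field_simps powr_one)
  have e: "A powr (-1/p) = A powr (-1/p - 1) * A" using A by (simp add: powr_diff)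
  have "1 * A powr (-1/p) + ((-1/p) * A powr (-1/p - 1) * (p * t powr (p-1))) * t 
       = A powr (-1/p - 1) * (A - t * t powr (p-1))" using p unfolding e by (simp add: field_simps)
  also have "\<dots> = A powr (-1/p - 1)" unfolding tp A_def by simp
  finally have eq: "1 * A powr (-1/p) + ((-1/p) * A powr (-1/p - 1) * (p * t powr (p-1))) * t = A powr (-1/p - 1)" .
  have f: "(\<lambda>t. t / (1 + t powr p) powr (1/p)) = (\<lambda>t. t * (1 + t powr p) powr (-1/p))"
    by (rule ext) (simp add: powr_minus divide_inverse)
  show ?thesis using d4 unfolding eq unfolding f A_def .
qed

lemma cont_powr0:
  fixes p :: real assumes "p > 0" "S \<subseteq> {0..}" shows "continuous_on S (\<lambda>t::real. t powr p)"
  using assms by (intro continuous_on_powr') (auto intro: continuous_intros)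

lemma g_lt1:
  fixes p t :: real assumes p: "p > 1" and t: "t \<ge> 0"
  shows "t / (1 + t powr p) powr (1/p) < 1"
proof -
  have A: "1 + t powr p > 0" by (simp add: add_pos_nonneg)
  have "t = (t powr p) powr (1/p)" using t p by (simp add: powr_powr)
  also have "\<dots> < (1 + t powr p) powr (1/p)" using p by (intro powr_less_mono2) auto
  finally show ?thesis using A by simp
qed

lemma key_identity:
  fixes p t :: real assumes p: "p > 1" and t: "t \<ge> 0"
  shows "(1 + t powr p) powr (-1/p - 1) * (1 - (t / (1 + t powr p) powr (1/p)) powr p) powr (-1/p)
        = 1 / (1 + t powr p)"
proof -
  define A where "A = 1 + t powr p"
  have A: "A > 0" using t by (simp add: A_def add_pos_nonneg)
  have "(t / A powr (1/p)) powr p = t powr p / A" using A t p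
    by (simp add: powr_divide powr_powr)
  hence "1 - (t / A powr (1/p)) powr p = 1 / A" using A unfolding A_def by (simp add: field_simps)
  hence "(1 - (t / A powr (1/p)) powr p) powr (-1/p) = A powr (1/p)" using A
    by (simp add: powr_divide powr_minus_divide)
  hence "A powr (-1/p - 1) * (1 - (t / A powr (1/p)) powr p) powr (-1/p) = A powr (-1/p - 1 + 1/p)"
    using A by (simp add: powr_add[symmetric])
  also have "\<dots> = 1 / A" using A by (simp add: powr_minus_divide)
  finally show ?thesis unfolding A_def .
qed

lemma main_id:
  fixes p y :: real assumes p: "p > 1" and y: "y \<ge> 0"
  shows "arcsin_p p (y / (1 + y powr p) powr (1 / p)) = arctan_p p y"
proof -
  define g where "g = (\<lambda>t::real. t / (1 + t powr p) powr (1/p))"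
  define g' where "g' = (\<lambda>t::real. (1 + t powr p) powr (-1/p - 1))"
  define f where "f = (\<lambda>t::real. (1 - t powr p) powr (- 1 / p))"
  have pos: "\<And>t::real. 1 + t powr p > 0" by (simp add: add_pos_nonneg)
  have contpp: "continuous_on {a..b} (\<lambda>t::real. t powr p)" if "a \<ge> 0" for a b
    using that p by (intro cont_powr0) auto
  have gcont: "continuous_on {0..y} g" unfolding g_def
    using pos by (intro continuous_intros contpp) (auto simp: less_imp_neq[symmetric])
  have g0: "g 0 = 0" unfolding g_def by simp
  have gmono: "g a \<le> g b" if "0 \<le> a" "a \<le> b" for a b
  proof (rule DERIV_nonneg_imp_increasing_open[OF that(2)])
    fix x assume "a < x" "x < b"
    then show "\<exists>y. DERIV g x :> y \<and> y \<ge> 0" unfolding g_def using deriv_g[OF p, of x] that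
      by (intro exI[of _ "(1 + x powr p) powr (-1/p - 1)"]) auto
  next
    show "continuous_on {a..b} g" unfolding g_def
      using pos that by (intro continuous_intros contpp) (auto simp: less_imp_neq[symmetric])
  qed
  have gy1: "g y < 1" unfolding g_def using g_lt1[OF p y] .
  have gsub: "g ` {0..y} \<subseteq> {0..g y}" using gmono g0 by (auto simp: image_subset_iff) (metis g0 order_refl)
  have fcont: "continuous_on {0..g y} f" unfolding f_def
  proof (rule continuous_on_powr[OF _ continuous_on_const])
    have "continuous_on {0..g y} (\<lambda>t. t powr p)" by (rule contpp) simp
    then show "continuous_on {0..g y} (\<lambda>t. 1 - t powr p)" by (rule continuous_on_diff[OF continuous_on_const])
    show "\<forall>t\<in>{0..g y}. 1 - t powr p \<noteq> 0"
    proof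
      fix t assume t: "t \<in> {0..g y}"
      have "t powr p \<le> (g y) powr p" using t p by (intro powr_mono2) auto
      also have "\<dots> < 1 powr p" using gy1 t p by (intro powr_less_mono2) auto
      finally show "1 - t powr p \<noteq> 0" by simp
    qed
  qed
  have der: "(g has_field_derivative g' x) (at x within {0..y})" if "x \<in> {0..y} - {0}" for x
    using deriv_g[OF p, of x] that unfolding g_def g'_def by (auto intro: has_field_derivative_at_within)
  have "((\<lambda>x. g' x *\<^sub>R f (g x)) has_integral integral {g 0..g y} f) {0..y}"
    using gmono[OF order_refl y]
    by (intro has_integral_substitution_strong[where s="{0}", OF _ y _ gsub fcont gcont der])
       (auto simp: g0)
  moreover have "\<And>x. x \<in> {0..y} \<Longrightarrow> g' x *\<^sub>R f (g x) = 1 / (1 + x powr p)"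
    unfolding g_def g'_def f_def using key_identity[OF p] by simp
  ultimately have "((\<lambda>x. 1 / (1 + x powr p)) has_integral integral {0..g y} f) {0..y}"
    unfolding g0 using has_integral_cong by (metis (no_types, lifting))
  then show ?thesis unfolding arctan_p_def arcsin_p_def f_def g_def by (simp add: integral_unique)
qed

lemma part2:
  fixes p x :: real assumes p: "p > 1" and x: "0 < x" "x < 1"
  shows "arcsin_p p x = arctan_p p (x / (1 - x powr p) powr (1 / p))"
proof -
  define B where "B = 1 - x powr p"
  have xp: "x powr p < 1" using x p powr_less_mono2[of p x 1] by simp
  hence B: "B > 0" unfolding B_def by simp
  define y where "y = x / B powr (1/p)"
  have y: "y \<ge> 0" unfolding y_def using x B by simp
  have "y powr p = x powr p / B" unfolding y_def using x B p by (simp add: powr_divide powr_powr)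
  hence "1 + y powr p = 1 / B" using B unfolding B_def by (simp add: field_simps)
  hence "(1 + y powr p) powr (1/p) = 1 / B powr (1/p)" using B by (simp add: powr_divide)
  hence "y / (1 + y powr p) powr (1 / p) = x" unfolding y_def using B by simp
  with main_id[OF p y] show ?thesis unfolding y_def B_def by simp
qed

theorem lemma3p7:
  fixes p x :: real
  assumes "p > 1" and "0 < x" and "x < 1"
  shows "arcsin_p p (x / (1 + x powr p) powr (1 / p)) = arctan_p p x \<and>
    arcsin_p p x = arctan_p p (x / (1 - x powr p) powr (1 / p)) \<and>
    arccos_p p x = arctan_p p ((1 - x powr p) powr (1 / p) / x) \<and>
    arccos_p p (1 / (1 + x powr p) powr (1 / p)) = arctan_p p x"
proof (intro conjI)
  note p = assms(1) and x = assms(2,3)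
  show 1: "arcsin_p p (x / (1 + x powr p) powr (1 / p)) = arctan_p p x"
    using main_id[OF p] x by simp
  show "arcsin_p p x = arctan_p p (x / (1 - x powr p) powr (1 / p))" by (rule part2[OF p x])
  show "arccos_p p x = arctan_p p ((1 - x powr p) powr (1 / p) / x)"
  proof -
    define u where "u = (1 - x powr p) powr (1/p)"
    have xp: "x powr p < 1" using x p powr_less_mono2[of p x 1] by simp
    have xp0: "x powr p > 0" using x by simp
    have up: "u powr p = 1 - x powr p" unfolding u_def using xp p by (simp add: powr_powr)
    have u0: "u > 0" unfolding u_def using xp by simp
    have u1: "u < 1" unfolding u_def using powr_less_mono2[of "1/p" "1 - x powr p" 1] xp xp0 p by simp
    have "(1 - u powr p) powr (1/p) = x" unfolding up using x p by (simp add: powr_powr)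
    then show ?thesis using part2[OF p u0 u1] unfolding arccos_p_def u_def[symmetric] by simp
  qed
  show "arccos_p p (1 / (1 + x powr p) powr (1 / p)) = arctan_p p x"
  proof -
    define A where "A = 1 + x powr p"
    have A: "A > 0" unfolding A_def using x by (simp add: add_pos_nonneg)
    have "(1 / A powr (1/p)) powr p = 1 / A" using A p by (simp add: powr_divide powr_powr)
    hence "1 - (1 / A powr (1/p)) powr p = x powr p / A" using A unfolding A_def by (simp add: field_simps)
    hence "(1 - (1 / A powr (1/p)) powr p) powr (1/p) = x / A powr (1/p)"
      using A x p by (simp add: powr_divide powr_powr)
    then show ?thesis using 1 unfolding arccos_p_def A_def by simp
  qed
qed

end
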